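(* Let $\nu$ be a probability distribution on $[0,1]$ admitting a density bounded by some constant $M>0$, let $V\sim\nu$, and let $V_1,V_2,\dots$ be i.i.d. with law $\nu$. Then for every $t\in\mathbb N$ and every $p\in[0,1]$, \[0\le \mathbb E\big[\mathrm{GFT}_t(\mathbb E[V])\big]-\mathbb E\big[\mathrm{GFT}_t(p)\big]\le M\,\big|\mathbb E[V]-p\big|^2,\] and in particular $\max_{p\in[0,1]}\mathbb E[\mathrm{GFT}_t(p)]=\mathbb E[\mathrm{GFT}_t(\mathbb E[V])]$.
   Context: For $p,v_1,v_2\in[0,1]$, $\mathrm{gft}(p,v_1,v_2):=(v_1\vee v_2-v_1\wedge v_2)\,\mathbb I\{v_1\wedge v_2\le p\le v_1\vee v_2\}$ (with $\vee,\wedge$ denoting max and min), and $\mathrm{GFT}_t(q):=\mathrm{gft}(q,V_{2t-1},V_{2t})$. "Density bounded by $M$" means absolutely continuous w.r.t. Lebesgue measure with a density $f\le M$. *)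

theory Defs
  imports "HOL-Probability.Probability"
begin

definition gft :: "real \<Rightarrow> real \<Rightarrow> real \<Rightarrow> real" where
  "gft p v1 v2 = (if min v1 v2 \<le> p \<and> p \<le> max v1 v2 then max v1 v2 - min v1 v2 else 0)"

text \<open>GFT_t(q) = gft(q, V_{2t-1}, V_{2t}) for a sequence V indexed by positive naturals.\<close>
definition GFT :: "(nat \<Rightarrow> 'a \<Rightarrow> real) \<Rightarrow> nat \<Rightarrow> real \<Rightarrow> 'a \<Rightarrow> real" where
  "GFT V t q = (\<lambda>\<omega>. gft q (V (2*t - 1) \<omega>) (V (2*t) \<omega>))"

end

theory Submission imports Defs begin

lemma gft_split: "gft q x y = (if x \<le> q then 1 else (0::real)) * (if q \<le> y then y - q else 0) + (if x \<le> q then q - x else 0) * (if q \<le> y then 1 else (0::real)) + (if q \<le> x then x - q else 0) * (if y \<le> q then 1 else (0::real)) + (if q \<le> x then 1 else (0::real)) * (if y \<le> q then q - y else 0)"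
  unfolding gft_def by (auto simp: min_def max_def)

definition HH :: "real measure \<Rightarrow> real \<Rightarrow> real" where
  "HH nu q = 2 * ((\<integral>x. (if x \<le> q then 1 else (0::real)) \<partial>nu) * (\<integral>x. (if q \<le> x then x - q else 0) \<partial>nu)
     + (\<integral>x. (if x \<le> q then q - x else 0) \<partial>nu) * (\<integral>x. (if q \<le> x then 1 else (0::real)) \<partial>nu))"

lemma nu_part:
  fixes nu :: "real measure" and f :: "real \<Rightarrow> real" and Mb :: real
  assumes "prob_space nu"
    and fm: "f \<in> borel_measurable lborel" and f0: "\<And>x. 0 \<le> f x" and fM: "\<And>x. f x \<le> Mb"
    and nu: "nu = density lborel (\<lambda>x. ennreal (f x))"
    and e1: "emeasure nu {0..1} = 1"
  shows "(\<integral>x. x \<partial>nu) \<in> {0..1} \<and> 0 \<le> HH nu (\<integral>x. x \<partial>nu) - HH nu p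
     \<and> HH nu (\<integral>x. x \<partial>nu) - HH nu p \<le> Mb * ((\<integral>x. x \<partial>nu) - p)^2"
proof -
  interpret N: prob_space nu by fact
  note N.prob_space[simp]
  have snu[simp]: "sets nu = sets borel" using nu by simp
  have AE01: "AE x in nu. x \<in> {0..1}"
    using e1 N.prob_eq_1[of "{0..1}"] by (simp add: N.emeasure_eq_measure)
  have AEq: "AE x in nu. x \<noteq> q" for q
  proof -
    have "AE x in lborel. 0 < ennreal (f x) \<longrightarrow> x \<noteq> q"
      using AE_lborel_singleton[of q] by eventually_elim auto
    then show ?thesis unfolding nu using fm by (subst AE_density) auto
  qed
  have intg: "integrable nu g" if "g \<in> borel_measurable borel" "\<And>x. x \<in> {0..1} \<Longrightarrow> \<bar>g x\<bar> \<le> B" for g :: "real \<Rightarrow> real" and B :: real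
  proof (rule N.integrable_const_bound[where B=B])
    show "g \<in> borel_measurable nu" using that(1) by (simp add: measurable_cong_sets[OF snu refl])
    show "AE x in nu. norm (g x) \<le> B" using AE01 that(2) by (auto elim: AE_mp)
  qed
  define m where "m = (\<integral>x. x \<partial>nu)"
  have m01: "m \<in> {0..1}"
  proof -
    have "integrable nu (\<lambda>x. x)" by (rule intg[of _ 1]) auto
    have "0 \<le> m" unfolding m_def using AE01 by (intro integral_nonneg_AE) (auto elim: AE_mp)
    moreover have "m \<le> (\<integral>x. 1 \<partial>nu)" unfolding m_def
      using AE01 \<open>integrable nu (\<lambda>x. x)\<close> by (intro integral_mono_AE) (auto elim: AE_mp)
    ultimately show ?thesis by simp
  qed
  have one: "(\<integral>x. 1 \<partial>nu) = (1::real)" by simp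
  have Hq: "HH nu q = 2 * ((\<integral>x. (if q \<le> x then x - q else 0) \<partial>nu) - (m - q) * (\<integral>x. (if q \<le> x then 1 else (0::real)) \<partial>nu))" for q
  proof -
    have iA: "integrable nu (\<lambda>x. (if q \<le> x then x - q else 0))" by (rule intg[of _ "1+\<bar>q\<bar>"]) auto
    have iB: "integrable nu (\<lambda>x. (if x \<le> q then q - x else 0))" by (rule intg[of _ "1+\<bar>q\<bar>"]) auto
    have iF: "integrable nu (\<lambda>x. (if x \<le> q then 1 else 0::real))" by (rule intg[of _ 1]) auto
    have iS: "integrable nu (\<lambda>x. (if q \<le> x then 1 else 0::real))" by (rule intg[of _ 1]) auto
    have "(\<integral>x. (if x \<le> q then 1 else (0::real)) + (if q \<le> x then 1 else (0::real)) \<partial>nu) = (\<integral>x. (1::real) \<partial>nu)"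
      apply (rule integral_cong_AE)
        apply (simp add: measurable_cong_sets[OF snu refl])
       apply simp
      using AEq[of q] by eventually_elim auto
    then have "(\<integral>x. (if x \<le> q then 1 else (0::real)) \<partial>nu) + (\<integral>x. (if q \<le> x then 1 else (0::real)) \<partial>nu) = 1"
      using Bochner_Integration.integral_add[OF iF iS] one by linarith
    then have FS: "(\<integral>x. (if x \<le> q then 1 else (0::real)) \<partial>nu) = 1 - (\<integral>x. (if q \<le> x then 1 else (0::real)) \<partial>nu)" by simp
    have "(\<integral>x. (if q \<le> x then x - q else 0) - (if x \<le> q then q - x else 0) \<partial>nu) = (\<integral>x. x - q \<partial>nu)"
      by (rule Bochner_Integration.integral_cong) auto
    then have "(\<integral>x. (if q \<le> x then x - q else 0) \<partial>nu) - (\<integral>x. (if x \<le> q then q - x else 0) \<partial>nu) = (\<integral>x. x - q \<partial>nu)"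
      using Bochner_Integration.integral_diff[OF iA iB] by simp
    also have "\<dots> = m - q" unfolding m_def
      by (subst Bochner_Integration.integral_diff) (auto intro: intg[of _ 1])
    finally have AB: "(\<integral>x. (if x \<le> q then q - x else 0) \<partial>nu) = (\<integral>x. (if q \<le> x then x - q else 0) \<partial>nu) - (m - q)" by simp
    show ?thesis unfolding HH_def FS AB by (simp add: algebra_simps)
  qed
  define psi where "psi x = (if m \<le> x then x - m else 0) - (if p \<le> x then x - p else 0) + (m - p) * (if p \<le> x then 1 else (0::real))" for x
  have ipsi: "integrable nu psi" unfolding psi_def by (rule intg[of _ "2+2*\<bar>p\<bar>+2*\<bar>m\<bar>"]) auto
  have Hdiff: "HH nu m - HH nu p = 2 * (\<integral>x. psi x \<partial>nu)"
  proof -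
    have i1: "integrable nu (\<lambda>x. (if m \<le> x then x - m else 0))" by (rule intg[of _ "1+\<bar>m\<bar>"]) auto
    have i2: "integrable nu (\<lambda>x. (if p \<le> x then x - p else 0))" by (rule intg[of _ "1+\<bar>p\<bar>"]) auto
    have i3: "integrable nu (\<lambda>x. (m - p) * (if p \<le> x then 1 else 0::real))" by (rule intg[of _ "\<bar>m-p\<bar>"]) auto
    have "(\<integral>x. psi x \<partial>nu) = (\<integral>x. (if m \<le> x then x - m else 0) \<partial>nu) - (\<integral>x. (if p \<le> x then x - p else 0) \<partial>nu) + (m - p) * (\<integral>x. (if p \<le> x then 1 else (0::real)) \<partial>nu)"
      unfolding psi_def
      by (simp add: Bochner_Integration.integral_add[OF Bochner_Integration.integrable_diff[OF i1 i2] i3]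
            Bochner_Integration.integral_diff[OF i1 i2])
    then show ?thesis unfolding Hq by simp
  qed
  have psim[measurable]: "psi \<in> borel_measurable borel" unfolding psi_def[abs_def] by measurable
  have psi0: "0 \<le> psi x" for x unfolding psi_def by auto
  have dens: "(\<integral>x. psi x \<partial>nu) = (\<integral>x. f x * psi x \<partial>lborel)"
    unfolding nu using fm f0 by (subst integral_density) auto
  have ilb: "integrable lborel (\<lambda>x. f x * psi x)"
    using ipsi unfolding nu using fm f0 by (subst (asm) integrable_density) auto
  have bound: "(\<integral>x. psi x \<partial>nu) \<le> Mb * (m - p)^2 / 2"
  proof (cases "p \<le> m")
    case True
    have le: "f x * psi x \<le> Mb * (indicator {p..m} x * (m - x))" for x
    proof -
      have "psi x \<le> indicator {p..m} x * (m - x)" unfolding psi_def using True by (auto simp: indicator_def)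
      moreover have "0 \<le> indicator {p..m} x * (m - x)" using psi0[of x] calculation by linarith
      ultimately show ?thesis using f0[of x] fM[of x] psi0[of x]
        by (simp add: mult_mono)
    qed
    have si: "set_integrable lborel {p..m} (\<lambda>x. m - x)"
      by (rule borel_integrable_atLeastAtMost') (intro continuous_intros)
    have FTC: "(\<integral>x. indicator {p..m} x *\<^sub>R (m - x) \<partial>lborel) = (\<lambda>x. - ((m-x)^2/2)) m - (\<lambda>x. - ((m-x)^2/2)) p"
    proof (rule integral_FTC_atLeastAtMost[OF True])
      fix x assume "p \<le> x" "x \<le> m"
      have "((\<lambda>x. - ((m-x)^2/2)) has_real_derivative (m - x)) (at x within {p..m})"
        by (auto intro!: derivative_eq_intros simp: field_simps)
      then show "((\<lambda>x. - ((m-x)^2/2)) has_vector_derivative (m - x)) (at x within {p..m})"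
        by (simp add: has_real_derivative_iff_has_vector_derivative)
    qed (intro continuous_intros)
    have "(\<integral>x. f x * psi x \<partial>lborel) \<le> (\<integral>x. Mb * (indicator {p..m} x *\<^sub>R (m - x)) \<partial>lborel)"
      apply (rule integral_mono[OF ilb])
      using si unfolding set_integrable_def by (auto intro: le)
    also have "\<dots> = Mb * (m - p)^2 / 2" using FTC by simp
    finally show ?thesis using dens by simp
  next
    case False
    then have pm: "m \<le> p" by simp
    have le: "f x * psi x \<le> Mb * (indicator {m..p} x * (x - m))" for x
    proof -
      have "psi x \<le> indicator {m..p} x * (x - m)" unfolding psi_def using pm by (auto simp: indicator_def)
      moreover have "0 \<le> indicator {m..p} x * (x - m)" using psi0[of x] calculation by linarith
      ultimately show ?thesis using f0[of x] fM[of x] psi0[of x]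
        by (simp add: mult_mono)
    qed
    have si: "set_integrable lborel {m..p} (\<lambda>x. x - m)"
      by (rule borel_integrable_atLeastAtMost') (intro continuous_intros)
    have FTC: "(\<integral>x. indicator {m..p} x *\<^sub>R (x - m) \<partial>lborel) = (\<lambda>x. ((x-m)^2/2)) p - (\<lambda>x. ((x-m)^2/2)) m"
    proof (rule integral_FTC_atLeastAtMost[OF pm])
      fix x assume "m \<le> x" "x \<le> p"
      have "((\<lambda>x. ((x-m)^2/2)) has_real_derivative (x - m)) (at x within {m..p})"
        by (auto intro!: derivative_eq_intros simp: field_simps)
      then show "((\<lambda>x. ((x-m)^2/2)) has_vector_derivative (x - m)) (at x within {m..p})"
        by (simp add: has_real_derivative_iff_has_vector_derivative)
    qed (intro continuous_intros)
    have "(\<integral>x. f x * psi x \<partial>lborel) \<le> (\<integral>x. Mb * (indicator {m..p} x *\<^sub>R (x - m)) \<partial>lborel)"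
      apply (rule integral_mono[OF ilb])
      using si unfolding set_integrable_def by (auto intro: le)
    also have "\<dots> = Mb * (m - p)^2 / 2" using FTC by (simp add: power2_commute)
    finally show ?thesis using dens by simp
  qed
  have "0 \<le> (\<integral>x. psi x \<partial>nu)" using psi0 by (simp add: integral_nonneg)
  then show ?thesis using Hdiff bound m01 unfolding m_def by simp
qed


lemma nu_intg:
  fixes nu :: "real measure" and f :: "real \<Rightarrow> real" and g :: "real \<Rightarrow> real" and B :: real
  assumes "prob_space nu"
    and nu: "nu = density lborel (\<lambda>x. ennreal (f x))"
    and e1: "emeasure nu {0..1} = 1"
    and g: "g \<in> borel_measurable borel" and gB: "\<And>x. x \<in> {0..1} \<Longrightarrow> \<bar>g x\<bar> \<le> B"
  shows "integrable nu g"
proof -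
  interpret N: prob_space nu by fact
  have snu[simp]: "sets nu = sets borel" using nu by simp
  have AE01: "AE x in nu. x \<in> {0..1}"
    using e1 N.prob_eq_1[of "{0..1}"] by (simp add: N.emeasure_eq_measure)
  show ?thesis
  proof (rule N.integrable_const_bound[where B=B])
    show "g \<in> borel_measurable nu" using g by (simp add: measurable_cong_sets[OF snu refl])
    show "AE x in nu. norm (g x) \<le> B" using AE01 gB by (auto elim: AE_mp)
  qed
qed

lemma pair_indep:
  fixes M :: "'a measure" and Vs :: "nat \<Rightarrow> 'a \<Rightarrow> real"
  assumes "prob_space M" "prob_space.indep_vars M (\<lambda>_. borel) Vs {1..}" "i \<ge> 1" "j \<ge> 1" "i \<noteq> j"
  shows "prob_space.indep_var M borel (Vs i) borel (Vs j)"
proof -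
  interpret prob_space M by fact
  have "indep_var (PiM {i} (\<lambda>_. borel)) (\<lambda>\<omega>. restrict (\<lambda>i. Vs i \<omega>) {i}) (PiM {j} (\<lambda>_. borel)) (\<lambda>\<omega>. restrict (\<lambda>i. Vs i \<omega>) {j})"
    using assms by (intro indep_var_restrict) auto
  then have "indep_var borel ((\<lambda>x. x i) \<circ> (\<lambda>\<omega>. restrict (\<lambda>i. Vs i \<omega>) {i})) borel ((\<lambda>x. x j) \<circ> (\<lambda>\<omega>. restrict (\<lambda>i. Vs i \<omega>) {j}))"
    by (rule indep_var_compose) (auto intro: measurable_component_singleton)
  then show ?thesis by (simp add: comp_def)
qed

lemma prod_exp:
  fixes M :: "'a measure" and X Y :: "'a \<Rightarrow> real" and g k :: "real \<Rightarrow> real"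
  assumes "prob_space M" "prob_space.indep_var M borel X borel Y"
    and [measurable]: "X \<in> borel_measurable M" "Y \<in> borel_measurable M"
    and dX: "distr M borel X = nu" and dY: "distr M borel Y = nu"
    and [measurable]: "g \<in> borel_measurable borel" "k \<in> borel_measurable borel"
    and ig: "integrable nu g" and ik: "integrable nu k"
  shows "integrable M (\<lambda>\<omega>. g (X \<omega>) * k (Y \<omega>)) \<and> (\<integral>\<omega>. g (X \<omega>) * k (Y \<omega>) \<partial>M) = integral\<^sup>L nu g * integral\<^sup>L nu k"
proof -
  interpret prob_space M by fact
  have ind: "indep_var borel (\<lambda>\<omega>. g (X \<omega>)) borel (\<lambda>\<omega>. k (Y \<omega>))"
    using indep_var_compose[OF assms(2), of g borel k borel] by (simp add: comp_def)
  have i1: "integrable M (\<lambda>\<omega>. g (X \<omega>))" using ig unfolding dX[symmetric] by (subst (asm) integrable_distr_eq) auto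
  have i2: "integrable M (\<lambda>\<omega>. k (Y \<omega>))" using ik unfolding dY[symmetric] by (subst (asm) integrable_distr_eq) auto
  have e1: "integral\<^sup>L nu g = (\<integral>\<omega>. g (X \<omega>) \<partial>M)" unfolding dX[symmetric] by (subst integral_distr) auto
  have e2: "integral\<^sup>L nu k = (\<integral>\<omega>. k (Y \<omega>) \<partial>M)" unfolding dY[symmetric] by (subst integral_distr) auto
  show ?thesis using indep_var_lebesgue_integral[OF ind i1 i2] indep_var_integrable[OF ind i1 i2] e1 e2 by simp
qed

theorem theorem2p3:
  fixes M :: "'a measure" and nu :: "real measure" and f :: "real \<Rightarrow> real"
    and Mb :: real and V :: "'a \<Rightarrow> real" and Vs :: "nat \<Rightarrow> 'a \<Rightarrow> real"
    and t :: nat and p :: real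
  assumes "prob_space M"
    and "Mb > 0"
    and "f \<in> borel_measurable lborel" and "\<And>x. 0 \<le> f x" and "\<And>x. f x \<le> Mb"
    and "nu = density lborel (\<lambda>x. ennreal (f x))"
    and "emeasure nu {0..1} = 1"
    and "V \<in> borel_measurable M" and "distr M borel V = nu"
    and "\<And>i. Vs i \<in> borel_measurable M" and "\<And>i. i \<ge> 1 \<Longrightarrow> distr M borel (Vs i) = nu"
    and "prob_space.indep_vars M (\<lambda>_. borel) Vs {1..}"
    and "t \<ge> 1" and "p \<in> {0..1}"
  shows "0 \<le> prob_space.expectation M (GFT Vs t (prob_space.expectation M V))
              - prob_space.expectation M (GFT Vs t p)
       \<and> prob_space.expectation M (GFT Vs t (prob_space.expectation M V))
              - prob_space.expectation M (GFT Vs t p)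
           \<le> Mb * \<bar>prob_space.expectation M V - p\<bar>^2
       \<and> prob_space.expectation M V \<in> {0..1}
       \<and> (\<forall>q\<in>{0..1}. prob_space.expectation M (GFT Vs t q)
              \<le> prob_space.expectation M (GFT Vs t (prob_space.expectation M V)))"
proof -
  interpret prob_space M by fact
  note ass = assms
  have pnu: "prob_space nu" using prob_space_distr[OF assms(8)] assms(9) by simp
  interpret N: prob_space nu by (rule pnu)
  define X where "X = Vs (2*t-1)"
  define Y where "Y = Vs (2*t)"
  have [measurable]: "X \<in> borel_measurable M" "Y \<in> borel_measurable M" unfolding X_def Y_def using assms(10) by auto
  have dX: "distr M borel X = nu" and dY: "distr M borel Y = nu" unfolding X_def Y_def using assms(11) assms(13) by auto
  have iXY: "indep_var borel X borel Y" unfolding X_def Y_def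
    by (rule pair_indep[OF assms(1) assms(12)]) (use assms(13) in auto)
  have iYX: "indep_var borel Y borel X" unfolding X_def Y_def
    by (rule pair_indep[OF assms(1) assms(12)]) (use assms(13) in auto)
  have EV: "expectation V = (\<integral>x. x \<partial>nu)" unfolding assms(9)[symmetric] using assms(8) by (subst integral_distr) auto
  have intg: "integrable nu g" if "g \<in> borel_measurable borel" "\<And>x. x \<in> {0..1} \<Longrightarrow> \<bar>g x\<bar> \<le> B" for g :: "real \<Rightarrow> real" and B :: real
    by (rule nu_intg[OF pnu assms(6) assms(7) that])
  have E: "expectation (GFT Vs t q) = HH nu q" for q
  proof -
    define a where "a = (\<lambda>x::real. if x \<le> q then 1 else (0::real))"
    define b where "b = (\<lambda>x::real. if q \<le> x then x - q else (0::real))"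
    define c where "c = (\<lambda>x::real. if x \<le> q then q - x else (0::real))"
    define d where "d = (\<lambda>x::real. if q \<le> x then 1 else (0::real))"
    have [measurable]: "a \<in> borel_measurable borel" unfolding a_def by measurable
    have [measurable]: "b \<in> borel_measurable borel" unfolding b_def by measurable
    have [measurable]: "c \<in> borel_measurable borel" unfolding c_def by measurable
    have [measurable]: "d \<in> borel_measurable borel" unfolding d_def by measurable
    have ia: "integrable nu a" unfolding a_def by (rule intg[of _ 1]) auto
    have ib: "integrable nu b" unfolding b_def by (rule intg[of _ "1+\<bar>q\<bar>"]) auto
    have ic: "integrable nu c" unfolding c_def by (rule intg[of _ "1+\<bar>q\<bar>"]) auto
    have id: "integrable nu d" unfolding d_def by (rule intg[of _ 1]) auto
    note P1 = prod_exp[OF assms(1) iXY _ _ dX dY _ _ ia ib]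
    note P2 = prod_exp[OF assms(1) iXY _ _ dX dY _ _ ic id]
    note P3 = prod_exp[OF assms(1) iXY _ _ dX dY _ _ ib ia]
    note P4 = prod_exp[OF assms(1) iXY _ _ dX dY _ _ id ic]
    have G: "GFT Vs t q = (\<lambda>\<omega>. a (X \<omega>) * b (Y \<omega>) + c (X \<omega>) * d (Y \<omega>) + b (X \<omega>) * a (Y \<omega>) + d (X \<omega>) * c (Y \<omega>))"
      unfolding GFT_def X_def Y_def a_def b_def c_def d_def by (rule ext) (rule gft_split)
    have "expectation (GFT Vs t q) = integral\<^sup>L nu a * integral\<^sup>L nu b + integral\<^sup>L nu c * integral\<^sup>L nu d
       + integral\<^sup>L nu b * integral\<^sup>L nu a + integral\<^sup>L nu d * integral\<^sup>L nu c"
      unfolding G using P1 P2 P3 P4 by simp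
    then show ?thesis unfolding HH_def a_def b_def c_def d_def by (simp add: algebra_simps)
  qed
  have main: "(\<integral>x. x \<partial>nu) \<in> {0..1} \<and> 0 \<le> HH nu (\<integral>x. x \<partial>nu) - HH nu q
     \<and> HH nu (\<integral>x. x \<partial>nu) - HH nu q \<le> Mb * ((\<integral>x. x \<partial>nu) - q)^2" for q
    by (rule nu_part[OF pnu assms(3,4,5,6,7)])
  have all: "\<forall>q\<in>{0..1}. HH nu q \<le> HH nu (\<integral>x. x \<partial>nu)"
    using main by fastforce
  have sq: "\<bar>(\<integral>x. x \<partial>nu) - p\<bar>^2 = ((\<integral>x. x \<partial>nu) - p)^2" by (rule power2_abs)
  show ?thesis unfolding E EV sq using main[of p] all by blast
qed

end
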